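(* Assume $\mathrm{recc}(C)\subseteq\mathrm{recc}(P^B)$ and fix $k\in N_2$. For $j\in N$ let $\beta^*_j=\sup\{\lambda\ge0:\bar x+\lambda\bar r^j\in S_k^C\}$. Then $$\beta^*_j=\begin{cases}0&\text{if } j\in N_0\setminus J,\\ \beta_j&\text{if } j\in N_2\setminus J,\\ +\infty&\text{if } j\in J.\end{cases}$$
   Context: Let $A\in\mathbb{R}^{m\times n}$ have full row rank, $b\in\mathbb{R}^m$, and $P=\{x\in\mathbb{R}^n_+:Ax=b\}$. Let $C\subseteq\mathbb{R}^n$ be an open convex set. Fix a basis $B$ of $P$ with nonbasic set $N=\{1,\dots,n\}\setminus B$. Write $P=\{x:x_i=\bar b_i-\sum_{j\in N}\bar a_{ij}x_j\ (i\in B),\ x\ge0\}$ with $\bar b\ge0$. The basic solution $\bar x$ has $\bar x_i=\bar b_i$ ($i\in B$) and $0$ ($i\in N$). $P^B$ is obtained by dropping $x_i\ge0$ for $i\in B$. For $j\in N$, $\bar r^j$ has $\bar r^j_k=-\bar a_{kj}$ ($k\in B$), $\bar r^j_j=1$, and $0$ otherwise. Thus $P^B=\{\bar x+\sum_{j\in N}x_j\bar r^j:x_j\ge0\}$. It is assumed that $\bar x\notin\mathrm{cl}(C)$. For $j\in N$, $\alpha_j=\inf\{\lambda\ge0:\bar x+\lambda\bar r^j\in C\}$ and $\beta_j=\sup\{\lambda\ge0:\bar x+\lambda\bar r^j\in C\}$, with $\alpha_j=+\infty$, $\beta_j=-\infty$ if the halfline misses $C$. The set $N$ is partitioned into - $N_0=\{j:\alpha_j=+\infty,\beta_j=-\infty\}$,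 - $N_1=\{j:\alpha_j\in(0,\infty),\beta_j=+\infty\}$, - $N_2=\{j:\alpha_j\in(0,\infty),\beta_j\in(\alpha_j,\infty)\}$. For a set $K$, $\mathrm{recc}(K)=\{d:x+\lambda d\in K\ \forall x\in K,\lambda\ge0\}$. For $k\in N_2$, $S_k^C=\{\bar x\}+\mathrm{conv}\big(\bigcup_{j\in N_2}\{\lambda\bar r^j:0\le\lambda<\beta_j\}\big)+\{\lambda\bar r^k:\lambda\le0\}+\mathrm{recc}(C)$, and $J=\{i\in N:\bar r^i\in\mathrm{recc}(S_k^C)\}$. *)

theory Defs
  imports "HOL-Analysis.Analysis"
begin

text \<open>Index set {1..n} is the finite type 'n, rows {1..m} the finite type 'm.\<close>

definition is_basis :: "real^'n^'m \<Rightarrow> 'n set \<Rightarrow> bool" where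
  "is_basis A B \<longleftrightarrow> card B = CARD('m) \<and> inj_on (\<lambda>i. column i A) B
      \<and> independent ((\<lambda>i. column i A) ` B)"

text \<open>Basic solution x-bar: x_N = 0 and A x = b (unique when B is a basis).\<close>
definition basic_sol :: "real^'n^'m \<Rightarrow> real^'m \<Rightarrow> 'n set \<Rightarrow> real^'n" where
  "basic_sol A b B = (THE x. A *v x = b \<and> (\<forall>i. i \<notin> B \<longrightarrow> x $ i = 0))"

text \<open>Ray r-bar^j for nonbasic j: r_j = 1, r_k = 0 for other nonbasic k, and
  r_B = - A_B^{-1} A_j, i.e. A r = 0 (unique when B is a basis).\<close>
definition ray :: "real^'n^'m \<Rightarrow> 'n set \<Rightarrow> 'n \<Rightarrow> real^'n" where
  "ray A B j = (THE r. A *v r = 0 \<and> r $ j = 1 \<and> (\<forall>k. k \<notin> B \<and> k \<noteq> j \<longrightarrow> r $ k = 0))"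

text \<open>P^B: drop the nonnegativity of the basic variables.\<close>
definition PB :: "real^'n^'m \<Rightarrow> real^'m \<Rightarrow> 'n set \<Rightarrow> (real^'n) set" where
  "PB A b B = {x. A *v x = b \<and> (\<forall>i. i \<notin> B \<longrightarrow> 0 \<le> x $ i)}"

definition recc :: "('a::real_vector) set \<Rightarrow> 'a set" where
  "recc K = {d. \<forall>x\<in>K. \<forall>l::real. l \<ge> 0 \<longrightarrow> x + l *\<^sub>R d \<in> K}"

text \<open>Parameters of the halfline x0 + lambda d (lambda >= 0) in a set K;
  Inf/Sup of the empty set in ereal are +infinity / -infinity as in the paper.\<close>
definition hl_inf :: "('a::real_vector) set \<Rightarrow> 'a \<Rightarrow> 'a \<Rightarrow> ereal" where
  "hl_inf K x0 d = Inf (ereal ` {l. l \<ge> 0 \<and> x0 + l *\<^sub>R d \<in> K})"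

definition hl_sup :: "('a::real_vector) set \<Rightarrow> 'a \<Rightarrow> 'a \<Rightarrow> ereal" where
  "hl_sup K x0 d = Sup (ereal ` {l. l \<ge> 0 \<and> x0 + l *\<^sub>R d \<in> K})"

definition N0 :: "(real^'n) set \<Rightarrow> real^'n \<Rightarrow> ('n \<Rightarrow> real^'n) \<Rightarrow> 'n set \<Rightarrow> 'n set" where
  "N0 C x r N = {j\<in>N. hl_inf C x (r j) = \<infinity> \<and> hl_sup C x (r j) = -\<infinity>}"

definition N1 :: "(real^'n) set \<Rightarrow> real^'n \<Rightarrow> ('n \<Rightarrow> real^'n) \<Rightarrow> 'n set \<Rightarrow> 'n set" where
  "N1 C x r N = {j\<in>N. 0 < hl_inf C x (r j) \<and> hl_inf C x (r j) < \<infinity> \<and> hl_sup C x (r j) = \<infinity>}"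

definition N2 :: "(real^'n) set \<Rightarrow> real^'n \<Rightarrow> ('n \<Rightarrow> real^'n) \<Rightarrow> 'n set \<Rightarrow> 'n set" where
  "N2 C x r N = {j\<in>N. 0 < hl_inf C x (r j) \<and> hl_inf C x (r j) < \<infinity>
        \<and> hl_inf C x (r j) < hl_sup C x (r j) \<and> hl_sup C x (r j) < \<infinity>}"

definition S_kC :: "(real^'n) set \<Rightarrow> real^'n \<Rightarrow> ('n \<Rightarrow> real^'n) \<Rightarrow> 'n set \<Rightarrow> 'n \<Rightarrow> (real^'n) set" where
  "S_kC C x r N k =
     {x + u + v + w | u v w.
        u \<in> convex hull (\<Union>j\<in>N2 C x r N. {l *\<^sub>R r j | l. 0 \<le> l \<and> ereal l < hl_sup C x (r j)})
      \<and> v \<in> {l *\<^sub>R r k | l. l \<le> 0}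
      \<and> w \<in> recc C}"

definition Jset :: "(real^'n) set \<Rightarrow> real^'n \<Rightarrow> ('n \<Rightarrow> real^'n) \<Rightarrow> 'n set \<Rightarrow> 'n \<Rightarrow> 'n set" where
  "Jset C x r N k = {i\<in>N. r i \<in> recc (S_kC C x r N k)}"

end

theory Submission
  imports Defs
begin

lemma mv_B:
  fixes A :: "real^'n^'m"
  assumes "\<forall>i. i \<notin> B \<longrightarrow> d $ i = 0"
  shows "A *v d = (\<Sum>i\<in>B. d $ i *\<^sub>R column i A)"
proof -
  have "A *v d = (\<Sum>i\<in>UNIV. d $ i *\<^sub>R column i A)"
    by (simp add: matrix_mult_sum scalar_mult_eq_scaleR)
  also have "\<dots> = (\<Sum>i\<in>B. d $ i *\<^sub>R column i A)"
    by (rule sum.mono_neutral_right) (use assms in auto)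
  finally show ?thesis .
qed

lemma basis_unique:
  fixes A :: "real^'n^'m"
  assumes "is_basis A B" "A *v d = 0" "\<forall>i. i \<notin> B \<longrightarrow> d $ i = 0"
  shows "d = 0"
proof -
  let ?c = "\<lambda>i. column i A"
  have inj: "inj_on ?c B" and ind: "independent (?c ` B)" using assms(1) by (auto simp: is_basis_def)
  define u where "u = (\<lambda>v. d $ (inv_into B ?c v))"
  have "(\<Sum>v\<in>?c ` B. u v *\<^sub>R v) = (\<Sum>i\<in>B. u (?c i) *\<^sub>R ?c i)"
    by (rule sum.reindex[OF inj, unfolded comp_def])
  also have "\<dots> = (\<Sum>i\<in>B. d $ i *\<^sub>R ?c i)"
    by (rule sum.cong) (auto simp: u_def inv_into_f_f[OF inj])
  also have "\<dots> = 0" using mv_B[OF assms(3), of A] assms(2) by simp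
  finally have s: "(\<Sum>v\<in>?c ` B. u v *\<^sub>R v) = 0" .
  have "\<forall>v\<in>?c ` B. u v = 0"
    using ind s dependent_finite[of "?c ` B"] by auto
  hence "\<forall>i\<in>B. d $ i = 0" by (auto simp: u_def inv_into_f_f[OF inj])
  thus ?thesis using assms(3) by (metis vec_eq_iff zero_index)
qed

lemma basis_exists:
  fixes A :: "real^'n^'m"
  assumes "is_basis A B"
  shows "\<exists>x. A *v x = y \<and> (\<forall>i. i \<notin> B \<longrightarrow> x $ i = 0)"
proof -
  let ?c = "\<lambda>i. column i A"
  have inj: "inj_on ?c B" and ind: "independent (?c ` B)" and cB: "card B = CARD('m)"
    using assms(1) by (auto simp: is_basis_def)
  have finB: "finite B" by simp
  have "card (?c ` B) = CARD('m)" using card_image[OF inj] cB by simp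
  hence "(UNIV :: (real^'m) set) \<subseteq> span (?c ` B)"
    by (intro card_ge_dim_independent[OF _ ind]) (auto simp: dim_UNIV)
  hence "y \<in> span (?c ` B)" by auto
  then obtain u where u: "(\<Sum>v\<in>?c ` B. u v *\<^sub>R v) = y"
    using span_finite[of "?c ` B"] by auto
  define x :: "real^'n" where "x = (\<chi> i. if i \<in> B then u (?c i) else 0)"
  have x0: "\<forall>i. i \<notin> B \<longrightarrow> x $ i = 0" by (simp add: x_def)
  have "A *v x = (\<Sum>i\<in>B. x $ i *\<^sub>R ?c i)" by (rule mv_B[OF x0])
  also have "\<dots> = (\<Sum>i\<in>B. u (?c i) *\<^sub>R ?c i)" by (rule sum.cong) (auto simp: x_def)
  also have "\<dots> = y" using u sum.reindex[OF inj, of "\<lambda>v. u v *\<^sub>R v"] by (simp add: comp_def)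
  finally show ?thesis using x0 by blast
qed

lemma basic_sol_prop:
  fixes A :: "real^'n^'m"
  assumes "is_basis A B"
  shows "A *v basic_sol A b B = b \<and> (\<forall>i. i \<notin> B \<longrightarrow> basic_sol A b B $ i = 0)"
  unfolding basic_sol_def
proof (rule theI')
  obtain x where x: "A *v x = b \<and> (\<forall>i. i \<notin> B \<longrightarrow> x $ i = 0)" using basis_exists[OF assms] by blast
  show "\<exists>!x. A *v x = b \<and> (\<forall>i. i \<notin> B \<longrightarrow> x $ i = 0)"
  proof (rule ex1I[of _ x])
    show "A *v x = b \<and> (\<forall>i. i \<notin> B \<longrightarrow> x $ i = 0)" by (rule x)
    fix z assume z: "A *v z = b \<and> (\<forall>i. i \<notin> B \<longrightarrow> z $ i = 0)"
    have "z - x = 0" using z x by (intro basis_unique[OF assms]) (auto simp: matrix_vector_mult_diff_distrib)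
    thus "z = x" by simp
  qed
qed

lemma ray_prop:
  fixes A :: "real^'n^'m"
  assumes "is_basis A B" "j \<notin> B"
  shows "A *v ray A B j = 0 \<and> ray A B j $ j = 1 \<and> (\<forall>k. k \<notin> B \<and> k \<noteq> j \<longrightarrow> ray A B j $ k = 0)"
  unfolding ray_def
proof (rule theI')
  obtain x where x: "A *v x = A *v axis j 1 \<and> (\<forall>i. i \<notin> B \<longrightarrow> x $ i = 0)" using basis_exists[OF assms(1)] by blast
  let ?r = "axis j 1 - x"
  show "\<exists>!r. A *v r = 0 \<and> r $ j = 1 \<and> (\<forall>k. k \<notin> B \<and> k \<noteq> j \<longrightarrow> r $ k = 0)"
  proof (rule ex1I[of _ ?r])
    show "A *v ?r = 0 \<and> ?r $ j = 1 \<and> (\<forall>k. k \<notin> B \<and> k \<noteq> j \<longrightarrow> ?r $ k = 0)"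
      using x assms(2) by (auto simp: matrix_vector_mult_diff_distrib axis_def)
    fix z assume z: "A *v z = 0 \<and> z $ j = 1 \<and> (\<forall>k. k \<notin> B \<and> k \<noteq> j \<longrightarrow> z $ k = 0)"
    have "z - ?r = 0" using z x assms(2)
      by (intro basis_unique[OF assms(1)]) (auto simp: matrix_vector_mult_diff_distrib axis_def)
    thus "z = ?r" by simp
  qed
qed


lemma sup_unb:
  assumes "l0 \<ge> 0" "\<And>l. l \<ge> l0 \<Longrightarrow> P l"
  shows "Sup (ereal ` {l. l \<ge> 0 \<and> P l}) = \<infinity>"
proof -
  have "ereal (real n + l0) \<le> Sup (ereal ` {l. l \<ge> 0 \<and> P l})" for n :: nat
    by (rule Sup_upper) (use assms in auto)
  hence "\<forall>n::nat. ereal (real n) \<le> Sup (ereal ` {l. l \<ge> 0 \<and> P l})"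
    using assms(1) by (meson add_increasing2 ereal_less_eq(3) order_trans of_nat_0_le_iff order_refl)
  thus ?thesis by (meson less_PInf_Ex_of_nat linorder_not_less)
qed

lemma sup_between:
  assumes "0 < \<beta>" "\<beta> < \<infinity>" "\<And>l. 0 \<le> l \<Longrightarrow> ereal l < \<beta> \<Longrightarrow> P l"
    "\<And>l. 0 \<le> l \<Longrightarrow> P l \<Longrightarrow> ereal l < \<beta>"
  shows "Sup (ereal ` {l. l \<ge> 0 \<and> P l}) = \<beta>"
proof (rule antisym)
  show "Sup (ereal ` {l. l \<ge> 0 \<and> P l}) \<le> \<beta>"
    by (rule Sup_least) (use assms(4) in force)
  obtain b where b: "\<beta> = ereal b" "b > 0" using assms(1,2) by (cases \<beta>) auto
  show "\<beta> \<le> Sup (ereal ` {l. l \<ge> 0 \<and> P l})"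
    unfolding le_Sup_iff
  proof (intro allI impI)
    fix y assume y: "y < \<beta>"
    show "\<exists>a\<in>ereal ` {l. 0 \<le> l \<and> P l}. y < a"
    proof (cases y)
      case (real yr)
      define a where "a = max (b/2) ((yr + b)/2)"
      have "0 \<le> a" "a < b" "yr < a" using b y real by (auto simp: a_def max_def)
      thus ?thesis using assms(3) b real by force
    next
      case MInf thus ?thesis using assms(3)[of 0] b by force
    qed (use y in auto)
  qed
qed

lemma recc_add: "d1 \<in> recc K \<Longrightarrow> d2 \<in> recc K \<Longrightarrow> d1 + d2 \<in> recc K"
  unfolding recc_def
proof (intro CollectI ballI allI impI)
  fix x and l :: real assume 1: "d1 \<in> {d. \<forall>x\<in>K. \<forall>l::real. l \<ge> 0 \<longrightarrow> x + l *\<^sub>R d \<in> K}"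
    and 2: "d2 \<in> {d. \<forall>x\<in>K. \<forall>l::real. l \<ge> 0 \<longrightarrow> x + l *\<^sub>R d \<in> K}"
    and x: "x \<in> K" and l: "0 \<le> l"
  have "x + l *\<^sub>R d1 \<in> K" using 1 x l by blast
  hence "(x + l *\<^sub>R d1) + l *\<^sub>R d2 \<in> K" using 2 l by blast
  thus "x + l *\<^sub>R (d1 + d2) \<in> K" by (simp add: scaleR_add_right add.assoc)
qed

lemma recc_scale: "d \<in> recc K \<Longrightarrow> (c::real) \<ge> 0 \<Longrightarrow> c *\<^sub>R d \<in> recc K"
  unfolding recc_def by (simp add: mult_nonneg_nonneg)

lemma recc_zero: "0 \<in> recc K"
  unfolding recc_def by simp

lemma convex_coord_ge: "convex {x::real^'n. 0 \<le> x $ i}"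
proof -
  have "{x::real^'n. 0 \<le> x $ i} = {x. inner (axis i 1) x \<ge> 0}"
    by (auto simp: cart_eq_inner_axis inner_commute)
  thus ?thesis by (simp add: convex_halfspace_ge)
qed

lemma convex_coord_lt: "convex {x::real^'n. x $ i < c}"
proof -
  have "{x::real^'n. x $ i < c} = {x. inner (axis i 1) x < c}"
    by (auto simp: cart_eq_inner_axis inner_commute)
  thus ?thesis by (simp add: convex_halfspace_lt)
qed

theorem proposition7:
  fixes A :: "real^'n^'m" and b :: "real^'m" and B :: "'n set"
    and C :: "(real^'n) set" and k :: "'n"
  defines "N \<equiv> UNIV - B"
    and "xb \<equiv> basic_sol A b B"
    and "r \<equiv> ray A B"
  assumes "rank A = CARD('m)"
    and "is_basis A B"
    and "\<forall>i. 0 \<le> xb $ i"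
    and "open C" and "convex C"
    and "xb \<notin> closure C"
    and "recc C \<subseteq> recc (PB A b B)"
    and "k \<in> N2 C xb r N"
  shows "\<forall>j\<in>N.
     (j \<in> N0 C xb r N - Jset C xb r N k \<longrightarrow> hl_sup (S_kC C xb r N k) xb (r j) = 0)
   \<and> (j \<in> N2 C xb r N - Jset C xb r N k \<longrightarrow> hl_sup (S_kC C xb r N k) xb (r j) = hl_sup C xb (r j))
   \<and> (j \<in> Jset C xb r N k \<longrightarrow> hl_sup (S_kC C xb r N k) xb (r j) = \<infinity>)"
proof -
  have bas: "is_basis A B" by fact
  define S where "S = S_kC C xb r N k"
  define X where "X = (\<Union>j\<in>N2 C xb r N. {l *\<^sub>R r j | l. 0 \<le> l \<and> ereal l < hl_sup C xb (r j)})"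
  have S_iff: "x \<in> S \<longleftrightarrow> (\<exists>u m w. x = xb + u + m *\<^sub>R r k + w \<and> u \<in> convex hull X \<and> m \<le> 0 \<and> w \<in> recc C)" for x
    unfolding S_def S_kC_def X_def by blast
  have xbp: "A *v xb = b" "\<And>i. i \<in> N \<Longrightarrow> xb $ i = 0"
    using basic_sol_prop[OF bas, of b] by (auto simp: xb_def N_def)
  have rp: "A *v r j = 0" "r j $ j = 1" "\<And>i. i \<in> N \<Longrightarrow> i \<noteq> j \<Longrightarrow> r j $ i = 0" if "j \<in> N" for j
    using ray_prop[OF bas, of j] that by (auto simp: r_def N_def)
  have N2N: "N2 C xb r N \<subseteq> N" by (auto simp: N2_def)
  have kN: "k \<in> N" using assms(11) N2N by auto
  have k2: "0 < hl_inf C xb (r k)" "hl_inf C xb (r k) < \<infinity>" "hl_inf C xb (r k) < hl_sup C xb (r k)"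
     "hl_sup C xb (r k) < \<infinity>"
    using assms(11) by (auto simp: N2_def)
  obtain l0 where l0: "l0 \<ge> 0" "xb + l0 *\<^sub>R r k \<in> C"
  proof -
    have "{l. l \<ge> 0 \<and> xb + l *\<^sub>R r k \<in> C} \<noteq> {}"
    proof
      assume "{l. l \<ge> 0 \<and> xb + l *\<^sub>R r k \<in> C} = {}"
      hence "hl_inf C xb (r k) = Inf (ereal ` {})" unfolding hl_inf_def by (simp only:)
      hence "hl_inf C xb (r k) = \<infinity>" by (simp add: top_ereal_def)
      thus False using k2(2) by simp
    qed
    thus ?thesis using that by blast
  qed
  have reccC: "A *v w = 0" "\<And>i. i \<in> N \<Longrightarrow> 0 \<le> w $ i" if "w \<in> recc C" for w
  proof -
    have wP: "w \<in> recc (PB A b B)" using that assms(10) by blast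
    have "xb \<in> PB A b B" unfolding PB_def using xbp(1) assms(6) by blast
    moreover have "\<forall>x\<in>PB A b B. \<forall>l::real. l \<ge> 0 \<longrightarrow> x + l *\<^sub>R w \<in> PB A b B"
      using wP by (simp add: recc_def)
    ultimately have "xb + 1 *\<^sub>R w \<in> PB A b B" by (meson zero_le_one)
    hence P1: "A *v (xb + w) = b \<and> (\<forall>i. i \<notin> B \<longrightarrow> 0 \<le> (xb + w) $ i)" by (simp add: PB_def)
    hence "A *v xb + A *v w = b" by (simp add: matrix_vector_right_distrib)
    thus "A *v w = 0" using xbp by simp
    fix i assume i: "i \<in> N"
    hence "0 \<le> (xb + w) $ i" using P1 by (simp add: N_def)
    thus "0 \<le> w $ i" using xbp(2)[OF i] by simp
  qed
  have b0: "ereal 0 < hl_sup C xb (r j)" if "j \<in> N2 C xb r N" for j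
  proof -
    have "0 < hl_inf C xb (r j)" "hl_inf C xb (r j) < hl_sup C xb (r j)" using that by (auto simp: N2_def)
    hence "0 < hl_sup C xb (r j)" by (rule less_trans)
    thus ?thesis by (simp add: zero_ereal_def)
  qed
  have Xge: "0 \<le> x $ i" if "x \<in> convex hull X" "i \<in> N" for x i
  proof -
    have "X \<subseteq> {x. 0 \<le> x $ i}"
    proof
      fix x assume "x \<in> X"
      then obtain j l where j: "j \<in> N2 C xb r N" "0 \<le> l" "x = l *\<^sub>R r j" unfolding X_def by blast
      have "0 \<le> r j $ i" using rp[of j] j N2N that(2) by (cases "i = j") auto
      thus "x \<in> {x. 0 \<le> x $ i}" using j by simp
    qed
    hence "convex hull X \<subseteq> {x. 0 \<le> x $ i}" by (intro hull_minimal convex_coord_ge)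
    thus ?thesis using that by auto
  qed
  have Xlt: "x $ j < lam" if "x \<in> convex hull X" "j \<in> N" "0 < lam"
     "\<And>l. j \<in> N2 C xb r N \<Longrightarrow> 0 \<le> l \<Longrightarrow> ereal l < hl_sup C xb (r j) \<Longrightarrow> l < lam" for x j lam
  proof -
    have "X \<subseteq> {x. x $ j < lam}"
    proof
      fix x assume "x \<in> X"
      then obtain i l where i: "i \<in> N2 C xb r N" "0 \<le> l" "ereal l < hl_sup C xb (r i)" "x = l *\<^sub>R r i"
        unfolding X_def by blast
      show "x \<in> {x. x $ j < lam}"
      proof (cases "i = j")
        case True thus ?thesis using i that rp[of j] by auto
      next
        case False thus ?thesis using i that rp[of i] N2N by auto
      qed
    qed
    hence "convex hull X \<subseteq> {x. x $ j < lam}" by (intro hull_minimal convex_coord_lt)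
    thus ?thesis using that by auto
  qed
  have xbS: "xb \<in> S"
  proof -
    have "(0::real^'n) = 0 *\<^sub>R r k \<and> 0 \<le> (0::real) \<and> ereal 0 < hl_sup C xb (r k)"
      using b0[OF assms(11)] by simp
    hence "0 \<in> {l *\<^sub>R r k | l. 0 \<le> l \<and> ereal l < hl_sup C xb (r k)}" by blast
    hence "0 \<in> X" unfolding X_def using assms(11) by blast
    hence "0 \<in> convex hull X" by (rule hull_inc)
    moreover have "xb = xb + 0 + 0 *\<^sub>R r k + 0" by simp
    ultimately show ?thesis unfolding S_iff using recc_zero[of C] by blast
  qed
  have recj: "r j \<in> recc S" if H: "j \<in> N" "j \<noteq> k" "xb + lam *\<^sub>R r j \<in> S"
     "\<And>x. x \<in> convex hull X \<Longrightarrow> x $ j < lam" for j lam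
  proof -
    obtain u m w where uvw: "xb + lam *\<^sub>R r j = xb + u + m *\<^sub>R r k + w" "u \<in> convex hull X" "m \<le> 0" "w \<in> recc C"
      using H(3) S_iff by blast
    have eq: "lam *\<^sub>R r j = u + m *\<^sub>R r k + w" using uvw(1) by (simp add: algebra_simps)
    have co: "lam * r j $ i = u $ i + m * r k $ i + w $ i" for i
      using arg_cong[OF eq, of "\<lambda>v. v $ i"] by simp
    define wj where "wj = w $ j"
    define wk where "wk = w $ k"
    have ujl: "u $ j < lam" using H(4)[OF uvw(2)] .
    have wj: "wj > 0" using co[of j] rp[of j] rp(3)[of k j] H kN ujl wj_def by auto
    have wk: "wk \<ge> 0" using reccC(2)[OF uvw(4) kN] wk_def by simp
    have wi: "w $ i = 0" if "i \<in> N" "i \<noteq> j" "i \<noteq> k" for i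
      using co[of i] rp(3)[of j i] rp(3)[of k i] \<open>j \<in> N\<close> kN that Xge[OF uvw(2), of i] reccC(2)[OF uvw(4), of i]
      by auto
    have "w - wj *\<^sub>R r j - wk *\<^sub>R r k = 0"
    proof (rule basis_unique[OF bas])
      show "A *v (w - wj *\<^sub>R r j - wk *\<^sub>R r k) = 0"
        using reccC(1)[OF uvw(4)] rp(1)[OF \<open>j \<in> N\<close>] rp(1)[OF kN]
        by (simp add: matrix_vector_mult_diff_distrib matrix_vector_mult_scaleR)
      show "\<forall>i. i \<notin> B \<longrightarrow> (w - wj *\<^sub>R r j - wk *\<^sub>R r k) $ i = 0"
      proof (intro allI impI)
        fix i assume "i \<notin> B"
        hence iN: "i \<in> N" by (simp add: N_def)
        show "(w - wj *\<^sub>R r j - wk *\<^sub>R r k) $ i = 0"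
          using iN wi[OF iN] rp[OF \<open>j \<in> N\<close>] rp[OF kN] \<open>j \<noteq> k\<close> wj_def wk_def
          by (cases "i = j"; cases "i = k") auto
      qed
    qed
    hence wdec: "w = wj *\<^sub>R r j + wk *\<^sub>R r k" by (simp add: algebra_simps)
    show ?thesis unfolding recc_def
    proof (intro CollectI ballI allI impI)
      fix x l assume xS: "x \<in> S" and l: "0 \<le> (l::real)"
      obtain u' m' w' where x: "x = xb + u' + m' *\<^sub>R r k + w'" "u' \<in> convex hull X" "m' \<le> 0" "w' \<in> recc C"
        using xS S_iff by blast
      have h1: "(l / wj) *\<^sub>R w = l *\<^sub>R r j + (l * wk / wj) *\<^sub>R r k"
        using wj by (simp add: wdec scaleR_add_right)
      have "x + l *\<^sub>R r j = xb + u' + (m' - l * wk / wj) *\<^sub>R r k + (w' + (l / wj) *\<^sub>R w)"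
        unfolding h1 x(1) by (simp add: algebra_simps)
      moreover have "m' - l * wk / wj \<le> 0" proof -
        have "0 \<le> l * wk / wj" using l wk wj by simp
        thus ?thesis using x(3) by linarith
      qed
      moreover have "w' + (l / wj) *\<^sub>R w \<in> recc C"
        using x(4) uvw(4) l wj by (intro recc_add recc_scale) auto
      ultimately show "x + l *\<^sub>R r j \<in> S" using x(2) S_iff by blast
    qed
  qed
  have reck: False if H: "xb + lam *\<^sub>R r k \<in> S" "\<And>x. x \<in> convex hull X \<Longrightarrow> x $ k < lam" for lam
  proof -
    obtain u m w where uvw: "xb + lam *\<^sub>R r k = xb + u + m *\<^sub>R r k + w" "u \<in> convex hull X" "m \<le> 0" "w \<in> recc C"
      using H(1) S_iff by blast
    have eq: "lam *\<^sub>R r k = u + m *\<^sub>R r k + w" using uvw(1) by (simp add: algebra_simps)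
    have co: "lam * r k $ i = u $ i + m * r k $ i + w $ i" for i
      using arg_cong[OF eq, of "\<lambda>v. v $ i"] by simp
    define wk where "wk = w $ k"
    have wk: "wk > 0" using co[of k] rp[OF kN] H(2)[OF uvw(2)] uvw(3) wk_def by auto
    have wi: "w $ i = 0" if "i \<in> N" "i \<noteq> k" for i
      using co[of i] rp(3)[of k i] kN that Xge[OF uvw(2), of i] reccC(2)[OF uvw(4), of i]
      by auto
    have "w - wk *\<^sub>R r k = 0"
    proof (rule basis_unique[OF bas])
      show "A *v (w - wk *\<^sub>R r k) = 0"
        using reccC(1)[OF uvw(4)] rp(1)[OF kN]
        by (simp add: matrix_vector_mult_diff_distrib matrix_vector_mult_scaleR)
      show "\<forall>i. i \<notin> B \<longrightarrow> (w - wk *\<^sub>R r k) $ i = 0"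
      proof (intro allI impI)
        fix i assume "i \<notin> B"
        hence iN: "i \<in> N" by (simp add: N_def)
        show "(w - wk *\<^sub>R r k) $ i = 0"
          using iN wi[OF iN] rp[OF kN] wk_def by (cases "i = k") auto
      qed
    qed
    hence "r k = (1 / wk) *\<^sub>R w" using wk by (simp add: algebra_simps)
    hence rkC: "r k \<in> recc C" using recc_scale[OF uvw(4), of "1/wk"] wk by simp
    have "hl_sup C xb (r k) = \<infinity>"
      unfolding hl_sup_def
    proof (rule sup_unb[OF l0(1)])
      fix l assume "l0 \<le> l"
      hence "(xb + l0 *\<^sub>R r k) + (l - l0) *\<^sub>R r k \<in> C" using rkC l0(2) unfolding recc_def by auto
      thus "xb + l *\<^sub>R r k \<in> C" by (simp add: algebra_simps)
    qed
    thus False using k2(4) by simp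
  qed
  show ?thesis
  proof (intro ballI conjI impI)
    fix j assume jN: "j \<in> N"
    have T: "hl_sup (S_kC C xb r N k) xb (r j) = Sup (ereal ` {l. l \<ge> 0 \<and> xb + l *\<^sub>R r j \<in> S})"
      by (simp add: hl_sup_def S_def)
    {
      assume "j \<in> Jset C xb r N k"
      hence rj: "r j \<in> recc S" by (simp add: Jset_def S_def)
      show "hl_sup (S_kC C xb r N k) xb (r j) = \<infinity>"
        unfolding T by (rule sup_unb[of 0]) (use rj xbS in \<open>auto simp: recc_def\<close>)
    next
      assume j0: "j \<in> N0 C xb r N - Jset C xb r N k"
      have jn2: "j \<notin> N2 C xb r N" using j0 by (auto simp: N0_def N2_def)
      have jk: "j \<noteq> k" using jn2 assms(11) by auto
      have "{l. l \<ge> 0 \<and> xb + l *\<^sub>R r j \<in> S} = {0}"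
      proof (rule set_eqI, rule iffI)
        fix l assume l: "l \<in> {l. l \<ge> 0 \<and> xb + l *\<^sub>R r j \<in> S}"
        show "l \<in> {0}"
        proof (rule ccontr)
          assume "l \<notin> {0}"
          hence lp: "0 < l" using l by auto
          have "r j \<in> recc S"
            using l jN jk Xlt[OF _ jN lp] jn2 by (intro recj[of j l]) auto
          thus False using j0 jN by (simp add: Jset_def S_def)
        qed
      qed (use xbS in auto)
      thus "hl_sup (S_kC C xb r N k) xb (r j) = 0" unfolding T by (simp add: zero_ereal_def)
    next
      assume j2: "j \<in> N2 C xb r N - Jset C xb r N k"
      have bj: "0 < hl_sup C xb (r j)" "hl_sup C xb (r j) < \<infinity>"
        using b0[of j] j2 by (auto simp: N2_def zero_ereal_def)
      show "hl_sup (S_kC C xb r N k) xb (r j) = hl_sup C xb (r j)"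
        unfolding T
      proof (rule sup_between[OF bj])
        fix l assume l: "0 \<le> l" "ereal l < hl_sup C xb (r j)"
        hence "l *\<^sub>R r j \<in> X" using j2 unfolding X_def by blast
        hence "l *\<^sub>R r j \<in> convex hull X" by (rule hull_inc)
        hence "xb + l *\<^sub>R r j = xb + l *\<^sub>R r j + 0 *\<^sub>R r k + 0 \<and> l *\<^sub>R r j \<in> convex hull X \<and> (0::real) \<le> 0 \<and> 0 \<in> recc C"
          using recc_zero by simp
        thus "xb + l *\<^sub>R r j \<in> S" unfolding S_iff by blast
      next
        fix l assume l: "0 \<le> l" "xb + l *\<^sub>R r j \<in> S"
        show "ereal l < hl_sup C xb (r j)"
        proof (rule ccontr)
          assume "\<not> ereal l < hl_sup C xb (r j)"
          hence ge: "hl_sup C xb (r j) \<le> ereal l" by simp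
          hence lp: "0 < l" using bj(1) by (metis ereal_less(2) less_le_trans)
          have lt: "\<And>x. x \<in> convex hull X \<Longrightarrow> x $ j < l"
            using Xlt[OF _ jN lp] ge by (metis ereal_less_eq(3) less_le_trans linorder_not_less order_less_imp_le)
          show False
          proof (cases "j = k")
            case True thus False using reck[of l] l lt by auto
          next
            case False
            hence "r j \<in> recc S" using recj[OF jN False l(2) lt] by simp
            thus False using j2 jN by (simp add: Jset_def S_def)
          qed
        qed
      qed
    }
  qed
qed

end
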